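(* Let $\mathcal{Z}$ be a data space with unknown distribution $\mu$, let $S=(Z_1,\dots,Z_n)$ have i.i.d. entries $Z_i\sim\mu$, let the learning algorithm be a Markov kernel $P_{W|S}$ producing a hypothesis $W$ in a hypothesis class $\mathcal{W}$, with $P_W$ the marginal of $W$ and $P_{W,Z_i}$ the joint law of $(W,Z_i)$. Let $l:\mathcal{W}\times\mathcal{Z}\to\mathbb{R}^+$ be a loss function and assume that for every $i=1,\dots,n$, $l(W,Z_i)$ is $\sigma$-subgaussian when $(W,Z_i)$ is distributed according to $\frac{P_{W,Z_i}+P_W\otimes\mu}{2}$. If $I(W;Z_i)\ge 8(\log 2)^2$ for all $i=1,\dots,n$, then $$\frac2n\sum_{i=1}^n\sqrt{2\sigma^2 I_{JS}(W;Z_i)}\le\frac1n\sum_{i=1}^n\sqrt{2\sigma^2 I(W;Z_i)},$$ i.e. the Jensen–Shannon information upper bound $\frac2n\sum_i\sqrt{2\sigma^2 I_{JS}(W;Z_i)}$ on $|\overline{\text{gen}}(P_{W|S},\mu)|$ is no larger than the mutual information upper bound $\frac1n\sum_i\sqrt{2\sigma^2 I(W;Z_i)}$.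
   Context: A random variable $X$ is $\sigma$-subgaussian if $\mathbb{E}[e^{\lambda(X-\mathbb{E}X)}]\le e^{\lambda^2\sigma^2/2}$ for all $\lambda\in\mathbb{R}$. Expected generalization error: $\overline{\text{gen}}(P_{W|S},\mu)=\mathbb{E}_{P_{W,S}}\big[\int l(W,z)\,\mu(dz)-\frac1n\sum_{i=1}^n l(W,Z_i)\big]$. Mutual information: $I(W;Z_i)=KL(P_{W,Z_i}\|P_W\otimes P_{Z_i})$. Jensen–Shannon information: $I_{JS}(W;Z_i)=\frac12 KL\big(P_{W,Z_i}\|M_i\big)+\frac12 KL\big(P_W\otimes P_{Z_i}\|M_i\big)$ with $M_i=\frac{P_{W,Z_i}+P_W\otimes P_{Z_i}}{2}$; here $P_{Z_i}=\mu$, $KL$ is the Kullback–Leibler divergence, and $\log$ is the natural logarithm. *)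

theory Defs
  imports "HOL-Probability.Probability"
begin

text \<open>Kullback--Leibler divergence KL(P || Q) with natural logarithm, extended-real valued:
  it equals the library quantity KL_divergence (exp 1) Q P = integral of ln (dP/dQ) w.r.t. P
  when P is absolutely continuous w.r.t. Q and ln (dP/dQ) is P-integrable, and +infinity otherwise
  (for probability measures, finiteness of KL is equivalent to this integrability).\<close>
definition KLdiv :: "'a measure \<Rightarrow> 'a measure \<Rightarrow> ereal" where
  "KLdiv P Q =
     (if absolutely_continuous Q P \<and> integrable P (entropy_density (exp 1) Q P)
      then ereal (KL_divergence (exp 1) Q P) else \<infinity>)"

definition mix_half :: "'a measure \<Rightarrow> 'a measure \<Rightarrow> 'a measure" where
  "mix_half P Q = measure_of (space P) (sets P) (\<lambda>A. (emeasure P A + emeasure Q A) / 2)"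

definition JSdiv :: "'a measure \<Rightarrow> 'a measure \<Rightarrow> ereal" where
  "JSdiv P Q = (KLdiv P (mix_half P Q) + KLdiv Q (mix_half P Q)) / 2"

definition subgaussian :: "'a measure \<Rightarrow> ('a \<Rightarrow> real) \<Rightarrow> real \<Rightarrow> bool" where
  "subgaussian M X \<sigma> \<longleftrightarrow> integrable M X \<and>
     (\<forall>t::real. (\<integral>\<^sup>+x. ennreal (exp (t * (X x - (\<integral>y. X y \<partial>M)))) \<partial>M)
                  \<le> ennreal (exp (t\<^sup>2 * \<sigma>\<^sup>2 / 2)))"

definition esqrt :: "ereal \<Rightarrow> ereal" where
  "esqrt x = (if x = \<infinity> then \<infinity> else ereal (sqrt (real_of_ereal x)))"

end

theory Submission imports Defs "HOL-Analysis.Harmonic_Numbers" begin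

lemma esqrt_upper:
  assumes "x \<le> ereal (ln 2)" "0 \<le> c"
  shows "esqrt (ereal c * x) \<le> ereal (sqrt (c * ln 2))"
proof (cases x)
  case (real r)
  then have "c * r \<le> c * ln 2" using assms by (simp add: mult_left_mono)
  then show ?thesis using real by (simp add: esqrt_def)
next
  case PInf then show ?thesis using assms by simp
next
  case MInf
  have "0 \<le> sqrt (c * ln 2)" using assms by simp
  then show ?thesis using MInf assms
    by (cases "c = 0") (auto simp: esqrt_def)
qed

lemma esqrt_lower:
  assumes "ereal (8 * (ln 2)\<^sup>2) \<le> y" "0 \<le> c"
  shows "ereal (sqrt (c * (8 * (ln 2)\<^sup>2))) \<le> esqrt (ereal c * y)"
proof (cases y)
  case (real r)
  then have "c * (8 * (ln 2)\<^sup>2) \<le> c * r" using assms by (simp add: mult_left_mono)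
  then show ?thesis using real by (simp add: esqrt_def)
next
  case PInf then show ?thesis using assms
    by (cases "c = 0") (auto simp: esqrt_def)
next
  case MInf then show ?thesis using assms by simp
qed

lemma const_ineq:
  assumes "0 \<le> c" shows "2 * sqrt (c * ln 2) \<le> sqrt (c * (8 * (ln 2)\<^sup>2))"
proof -
  have l: "2/3 \<le> ln (2::real)" by (rule ln2_ge_two_thirds)
  have "(2 * sqrt (c * ln 2))\<^sup>2 = 4 * c * ln 2" using assms l by (simp add: power_mult_distrib)
  also have "\<dots> \<le> c * (8 * (ln 2)\<^sup>2)"
  proof -
    have h1: "0 \<le> 4 * ln (2::real) * (2 * ln 2 - 1)" using l by (intro mult_nonneg_nonneg) auto
    have h2: "4 * ln 2 \<le> 8 * (ln (2::real))\<^sup>2" using h1 by (simp add: power2_eq_square algebra_simps)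
    have "c * (4 * ln 2) \<le> c * (8 * (ln 2)\<^sup>2)" using mult_left_mono[OF h2 assms] .
    then show ?thesis by (simp add: ac_simps)
  qed
  finally show ?thesis
    by (metis real_le_rsqrt real_sqrt_ge_zero)
qed

lemma mix_half_props:
  assumes P: "prob_space P" and Q: "prob_space Q" and sq: "sets Q = sets P"
  shows "sets (mix_half P Q) = sets P" "space (mix_half P Q) = space P"
    "\<And>A. A \<in> sets P \<Longrightarrow> emeasure (mix_half P Q) A = (emeasure P A + emeasure Q A) / 2"
proof -
  show "sets (mix_half P Q) = sets P" unfolding mix_half_def by simp
  show "space (mix_half P Q) = space P" unfolding mix_half_def by simp
  fix A assume A: "A \<in> sets P"
  have ca: "countably_additive (sets P) (\<lambda>A. (emeasure P A + emeasure Q A) / 2)"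
    unfolding countably_additive_def
  proof (intro allI impI)
    fix F :: "nat \<Rightarrow> _" assume F: "range F \<subseteq> sets P" "disjoint_family F"
    have "(\<Sum>i. (emeasure P (F i) + emeasure Q (F i)) / 2)
        = ((\<Sum>i. emeasure P (F i)) + (\<Sum>i. emeasure Q (F i))) / 2"
      by (simp add: divide_ennreal_def ennreal_suminf_multc suminf_add)
    also have "\<dots> = (emeasure P (\<Union>i. F i) + emeasure Q (\<Union>i. F i)) / 2"
      using F sq by (simp add: suminf_emeasure)
    finally show "(\<Sum>i. (emeasure P (F i) + emeasure Q (F i)) / 2)
        = (emeasure P (\<Union>i. F i) + emeasure Q (\<Union>i. F i)) / 2" .
  qed
  have pos: "positive (sets P) (\<lambda>A. (emeasure P A + emeasure Q A) / 2)"
    unfolding positive_def by simp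
  show "emeasure (mix_half P Q) A = (emeasure P A + emeasure Q A) / 2"
    unfolding mix_half_def
    by (rule emeasure_measure_of_sigma[OF sets.sigma_algebra_axioms pos ca A])
qed

lemma mix_half_sym:
  assumes "sets Q = sets P"
  shows "mix_half P Q = mix_half Q P"
  unfolding mix_half_def using assms sets_eq_imp_space_eq[OF assms]
  by (simp add: add.commute)

lemma mix_half_prob:
  assumes P: "prob_space P" and Q: "prob_space Q" and sq: "sets Q = sets P"
  shows "prob_space (mix_half P Q)"
proof
  have "emeasure (mix_half P Q) (space (mix_half P Q)) = (1 + 1) / 2"
    using mix_half_props[OF assms] sets_eq_imp_space_eq[OF sq]
      prob_space.emeasure_space_1[OF P] prob_space.emeasure_space_1[OF Q]
    by simp
  then show "emeasure (mix_half P Q) (space (mix_half P Q)) = 1"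
    by (simp add: one_add_one ennreal_divide_self)
qed

lemma tlnt_bound:
  fixes t :: real assumes "0 \<le> t" "t \<le> 2" shows "\<bar>t * ln t\<bar> \<le> 2"
proof (cases "t = 0")
  case True then show ?thesis by simp
next
  case False
  then have tp: "0 < t" using assms by simp
  have a: "ln t \<le> t - 1" by (rule ln_le_minus_one[OF tp])
  have b: "ln (1/t) \<le> 1/t - 1" using tp by (intro ln_le_minus_one) simp
  have b': "- ln t \<le> 1/t - 1" using b tp by (simp add: ln_div)
  have "t * ln t \<le> t * (t - 1)" using a tp by (simp add: mult_left_mono)
  moreover have "t * (- ln t) \<le> t * (1/t - 1)" using b' tp by (intro mult_left_mono) auto
  moreover have "t * (1/t - 1) = 1 - t" using tp by (simp add: field_simps)
  moreover have "t * (t - 1) \<le> 2"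
  proof -
    have "0 \<le> (2 - t) * (t + 1)" using assms by simp
    then show ?thesis by (simp add: algebra_simps)
  qed
  ultimately show ?thesis using assms by (auto simp: abs_le_iff)
qed

lemma ennreal_two_half: "2 * (x / 2) = (x::ennreal)"
proof -
  have "2 * (x / 2) = x * 2 / (1 * 2)" by (simp add: ennreal_times_divide mult.commute)
  also have "\<dots> = x / 1" by (rule divide_mult_eq) auto
  finally show ?thesis by (simp add: divide_ennreal_def)
qed

lemma kl_mix_le:
  assumes P: "prob_space P" and Q: "prob_space Q" and sq: "sets Q = sets P"
  shows "KLdiv P (mix_half P Q) \<le> ereal (ln 2)"
proof -
  let ?M = "mix_half P Q"
  note props = mix_half_props[OF assms]
  interpret M: prob_space ?M by (rule mix_half_prob[OF assms])
  interpret P: prob_space P by fact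
  have sPM: "sets P = sets ?M" using props by simp
  have ac: "absolutely_continuous ?M P"
    unfolding absolutely_continuous_def
  proof
    fix A assume "A \<in> null_sets ?M"
    then have A: "A \<in> sets P" "emeasure ?M A = 0" using props by auto
    then have "(emeasure P A + emeasure Q A)/2 = 0" using props by simp
    then have "emeasure P A = 0" by (simp add: ennreal_divide_eq_0_iff)
    then show "A \<in> null_sets P" using A by (simp add: null_setsI)
  qed
  define f where "f = RN_deriv ?M P"
  have dens: "density ?M f = P" unfolding f_def by (rule M.density_RN_deriv[OF ac sPM])
  have fm[measurable]: "f \<in> borel_measurable ?M" unfolding f_def by simp
  have ae2: "AE x in ?M. f x \<le> 2"
  proof -
    define A where "A = {x \<in> space ?M. 2 < f x}"
    have Am[measurable]: "A \<in> sets ?M" unfolding A_def by measurable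
    have PA: "emeasure P A = (\<integral>\<^sup>+x. f x * indicator A x \<partial>?M)"
      using dens emeasure_density[OF fm Am] by metis
    have "(\<integral>\<^sup>+x. f x * indicator A x \<partial>?M) = (\<integral>\<^sup>+x. (f x - 2) * indicator A x + 2 * indicator A x \<partial>?M)"
      by (intro nn_integral_cong) (auto simp: A_def indicator_def diff_add_self_ennreal)
    also have "\<dots> = (\<integral>\<^sup>+x. (f x - 2) * indicator A x \<partial>?M) + (\<integral>\<^sup>+x. 2 * indicator A x \<partial>?M)"
      by (rule nn_integral_add) auto
    also have "(\<integral>\<^sup>+x. 2 * indicator A x \<partial>?M) = 2 * emeasure ?M A"
      using Am by (simp add: nn_integral_cmult_indicator)
    finally have split: "emeasure P A = (\<integral>\<^sup>+x. (f x - 2) * indicator A x \<partial>?M) + 2 * emeasure ?M A"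
      using PA by simp
    have "2 * emeasure ?M A = emeasure P A + emeasure Q A"
      using props(3) Am sPM by (simp add: ennreal_two_half)
    then have le: "emeasure P A \<le> 2 * emeasure ?M A" by simp
    have fin: "2 * emeasure ?M A \<noteq> top" by (simp add: ennreal_mult_eq_top_iff)
    have "2 * emeasure ?M A + (\<integral>\<^sup>+x. (f x - 2) * indicator A x \<partial>?M) \<le> 2 * emeasure ?M A + 0"
      using split le by (simp add: add.commute)
    then have "(\<integral>\<^sup>+x. (f x - 2) * indicator A x \<partial>?M) \<le> 0"
      using fin by (subst (asm) ennreal_add_left_cancel_le) auto
    then have "(\<integral>\<^sup>+x. (f x - 2) * indicator A x \<partial>?M) = 0" by simp
    then have "AE x in ?M. (f x - 2) * indicator A x = 0"
      by (subst (asm) nn_integral_0_iff_AE) auto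
    moreover have "AE x in ?M. (f x - 2) * indicator A x = 0 \<longrightarrow> f x \<le> 2"
    proof (rule AE_I2, intro impI)
      fix x assume x: "x \<in> space ?M" and h: "(f x - 2) * indicator A x = 0"
      show "f x \<le> 2"
      proof (rule ccontr)
        assume "\<not> f x \<le> 2"
        then have xA: "x \<in> A" and le2: "2 \<le> f x" using x unfolding A_def by auto
        then have "f x - 2 = 0" using h by simp
        then have "f x = 2" using ennreal_ineq_diff_add[OF le2] by simp
        then show False using \<open>\<not> f x \<le> 2\<close> by simp
      qed
    qed
    ultimately show ?thesis by eventually_elim blast
  qed
  define g where "g x = enn2real (f x)" for x
  have gm[measurable]: "g \<in> borel_measurable ?M" unfolding g_def by measurable
  have fg: "AE x in ?M. f x = ennreal (g x)" using ae2
    by eventually_elim (auto simp: g_def ennreal_enn2real_if top_unique)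
  have g2: "AE x in ?M. 0 \<le> g x \<and> g x \<le> 2" using ae2
    by eventually_elim (auto simp: g_def enn2real_leI)
  have dens2: "density ?M (\<lambda>x. ennreal (g x)) = P"
    using dens density_cong[OF fm _ fg] by simp
  have ent: "entropy_density (exp 1) ?M P = (\<lambda>x. ln (g x))"
    unfolding entropy_density_def f_def g_def by (auto simp: log_def)
  have int: "integrable P (\<lambda>x. ln (g x))"
  proof -
    have "integrable ?M (\<lambda>x. g x *\<^sub>R ln (g x))"
    proof (rule M.integrable_const_bound[where B=2])
      show "AE x in ?M. norm (g x *\<^sub>R ln (g x)) \<le> 2"
        using g2 by eventually_elim (auto intro: tlnt_bound)
    qed simp
    then show ?thesis
      using integrable_density[of "\<lambda>x. ln (g x)" ?M g] dens2 g2 by auto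
  qed
  have aeP: "AE x in P. ln (g x) \<le> ln 2"
  proof -
    have "AE x in ?M. 0 < ennreal (g x) \<longrightarrow> ln (g x) \<le> ln 2"
      using g2 by eventually_elim auto
    then have "AE x in density ?M (\<lambda>x. ennreal (g x)). ln (g x) \<le> ln 2"
      using AE_density[of "\<lambda>x. ennreal (g x)" ?M "\<lambda>x. ln (g x) \<le> ln 2"] by simp
    then show ?thesis by (simp only: dens2)
  qed
  have "KL_divergence (exp 1) ?M P = (\<integral>x. ln (g x) \<partial>P)"
    unfolding KL_divergence_def ent ..
  also have "\<dots> \<le> (\<integral>x. ln 2 \<partial>P)"
    by (rule integral_mono_AE[OF int _ aeP]) simp
  also have "\<dots> = ln 2" using P.prob_space by simp
  finally show ?thesis
    unfolding KLdiv_def using ac int ent by simp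
qed

lemma js_le:
  assumes P: "prob_space P" and Q: "prob_space Q" and sq: "sets Q = sets P"
  shows "JSdiv P Q \<le> ereal (ln 2)"
proof -
  have a: "KLdiv P (mix_half P Q) \<le> ereal (ln 2)" by (rule kl_mix_le[OF assms])
  have b: "KLdiv Q (mix_half P Q) \<le> ereal (ln 2)"
    using kl_mix_le[OF Q P sq[symmetric]] mix_half_sym[OF sq] by simp
  have "KLdiv P (mix_half P Q) + KLdiv Q (mix_half P Q) \<le> ereal (ln 2) + ereal (ln 2)"
    using a b by (rule add_mono)
  then have s: "KLdiv P (mix_half P Q) + KLdiv Q (mix_half P Q) \<le> ereal (2 * ln 2)" by simp
  have h: "x \<le> ereal (2 * ln 2) \<Longrightarrow> x / 2 \<le> ereal (ln 2)" for x :: ereal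
    by (cases x) auto
  show ?thesis unfolding JSdiv_def by (rule h[OF s])
qed
theorem proposition2:
  fixes MW :: "'w measure" and MZ :: "'z measure" and \<mu> :: "'z measure"
    and n :: nat
    and K :: "(nat \<Rightarrow> 'z) \<Rightarrow> 'w measure"
    and l :: "'w \<Rightarrow> 'z \<Rightarrow> real"
    and \<sigma> :: real
  defines "PS \<equiv> PiM {..<n} (\<lambda>_. \<mu>)"
  defines "PW \<equiv> PS \<bind> K"
  defines "PWZ \<equiv> (\<lambda>i. PS \<bind> (\<lambda>s. distr (K s) (MW \<Otimes>\<^sub>M MZ) (\<lambda>w. (w, s i))))"
  assumes mu: "prob_space \<mu>" "sets \<mu> = sets MZ"
    and kernel: "K \<in> measurable (PiM {..<n} (\<lambda>_. MZ)) (prob_algebra MW)"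
    and loss_nonneg: "\<forall>w\<in>space MW. \<forall>z\<in>space MZ. 0 \<le> l w z"
    and subg: "\<forall>i<n. subgaussian (mix_half (PWZ i) (PW \<Otimes>\<^sub>M \<mu>)) (\<lambda>(w, z). l w z) \<sigma>"
    and MI_large: "\<forall>i<n. KLdiv (PWZ i) (PW \<Otimes>\<^sub>M \<mu>) \<ge> ereal (8 * (ln 2)\<^sup>2)"
  shows "ereal (2 / real n) * (\<Sum>i<n. esqrt (ereal (2 * \<sigma>\<^sup>2) * JSdiv (PWZ i) (PW \<Otimes>\<^sub>M \<mu>)))
       \<le> ereal (1 / real n) * (\<Sum>i<n. esqrt (ereal (2 * \<sigma>\<^sup>2) * KLdiv (PWZ i) (PW \<Otimes>\<^sub>M \<mu>)))"
proof -
  have PSp: "prob_space PS" unfolding PS_def by (rule prob_space_PiM) (use mu in auto)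
  have sPS: "sets PS = sets (PiM {..<n} (\<lambda>_. MZ))" unfolding PS_def
    by (rule sets_PiM_cong) (use mu in auto)
  have PSin: "PS \<in> space (prob_algebra (PiM {..<n} (\<lambda>_. MZ)))"
    using PSp sPS by (simp add: space_prob_algebra)
  have PWp: "prob_space PW" unfolding PW_def by (rule prob_space_bind'[OF PSin kernel])
  have sPW: "sets PW = sets MW" unfolding PW_def by (rule sets_bind'[OF PSin kernel])
  have Qp: "prob_space (PW \<Otimes>\<^sub>M \<mu>)" by (rule prob_space_pair[OF PWp mu(1)])
  have sQ: "sets (PW \<Otimes>\<^sub>M \<mu>) = sets (MW \<Otimes>\<^sub>M MZ)"
    using sPW mu(2) by (intro sets_pair_measure_cong)
  have Pi: "prob_space (PWZ i) \<and> sets (PWZ i) = sets (MW \<Otimes>\<^sub>M MZ)" if i: "i < n" for i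
  proof -
    have [simp]: "i \<in> {..<n}" using i by simp
    have k2: "(\<lambda>s. distr (K s) (MW \<Otimes>\<^sub>M MZ) (\<lambda>w. (w, s i))) \<in> PiM {..<n} (\<lambda>_. MZ) \<rightarrow>\<^sub>M prob_algebra (MW \<Otimes>\<^sub>M MZ)"
      by (rule measurable_distr_prob_space2[OF kernel]) (measurable, insert i, simp)
    show ?thesis unfolding PWZ_def using prob_space_bind'[OF PSin k2] sets_bind'[OF PSin k2] by simp
  qed
  have JS: "JSdiv (PWZ i) (PW \<Otimes>\<^sub>M \<mu>) \<le> ereal (ln 2)" if "i < n" for i
    using js_le[of "PWZ i" "PW \<Otimes>\<^sub>M \<mu>"] Pi[OF that] Qp sQ by simp
  define c where "c = 2 * \<sigma>\<^sup>2"
  have c0: "0 \<le> c" unfolding c_def by simp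
  have a: "esqrt (ereal c * JSdiv (PWZ i) (PW \<Otimes>\<^sub>M \<mu>)) \<le> ereal (sqrt (c * ln 2))" if "i < n" for i
    by (rule esqrt_upper[OF JS[OF that] c0])
  have b: "ereal (sqrt (c * (8 * (ln 2)\<^sup>2))) \<le> esqrt (ereal c * KLdiv (PWZ i) (PW \<Otimes>\<^sub>M \<mu>))" if "i < n" for i
    using esqrt_lower MI_large that c0 by blast
  show ?thesis
  proof (cases "n = 0")
    case True then show ?thesis by simp
  next
    case False
    then have np: "0 < real n" by simp
    have "ereal (2 / real n) * (\<Sum>i<n. esqrt (ereal (2 * \<sigma>\<^sup>2) * JSdiv (PWZ i) (PW \<Otimes>\<^sub>M \<mu>)))
        \<le> ereal (2 / real n) * (\<Sum>i<n. ereal (sqrt (c * ln 2)))"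
      using a np unfolding c_def by (intro ereal_mult_left_mono sum_mono) auto
    also have "\<dots> = ereal (2 * sqrt (c * ln 2))"
      using np by (simp add: sum_ereal)
    also have "\<dots> \<le> ereal (sqrt (c * (8 * (ln 2)\<^sup>2)))"
      using const_ineq[OF c0] by simp
    also have "\<dots> = ereal (1 / real n) * (\<Sum>i<n. ereal (sqrt (c * (8 * (ln 2)\<^sup>2))))"
      using np by (simp add: sum_ereal)
    also have "\<dots> \<le> ereal (1 / real n) * (\<Sum>i<n. esqrt (ereal (2 * \<sigma>\<^sup>2) * KLdiv (PWZ i) (PW \<Otimes>\<^sub>M \<mu>)))"
      using b np unfolding c_def by (intro ereal_mult_left_mono sum_mono) auto
    finally show ?thesis .
  qed
qed

end
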